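(* The class of languages representable by Xtructures over a finite alphabet $\Sigma$ is exactly the class of languages recognized by deterministic acyclic finite state automata (DAFSAs) over $\Sigma$: for every Xtructure there is a DAFSA accepting the same language, and for every DAFSA there is an Xtructure representing the same language.
   Context: Fix a finite alphabet $\Sigma$. A symbol layer is a nonempty subset $S \subseteq \Sigma$, represented as a single character, a finite disjunction of characters, or a character class. A token structure is a finite sequence $(l_1,\dots,l_n)$ of symbol layers, representing the strings $c_1\cdots c_n$ with $c_i\in l_i$. A branch is a finite sequence of token structures interleaved with fixed delimiter characters, representing the corresponding concatenations. An Xtructure $X$ is a finite set of branches and represents the language $L(X)$, the union of the languages of its branches; equivalently it is a directed acyclic graph whose nodes are symbol layers and whose edges are transitions, deterministic in that a string is never represented by more than one branch. A DAFSA is a deterministic finite automaton whose transition graph is acyclic. *)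

theory Defs
  imports Main
begin

type_synonym 'a token_structure = "'a set list"

text \<open>A branch: a first token structure, followed by a list of pairs
  (delimiter character, token structure).  This is the sequence
  T0 d1 T1 d2 T2 ... dk Tk.\<close>
type_synonym 'a branch = "'a token_structure \<times> ('a \<times> 'a token_structure) list"

definition symbol_layer :: "'a set \<Rightarrow> 'a set \<Rightarrow> bool" where
  "symbol_layer \<Sigma> S \<longleftrightarrow> S \<noteq> {} \<and> S \<subseteq> \<Sigma>"

definition wf_token_structure :: "'a set \<Rightarrow> 'a token_structure \<Rightarrow> bool" where
  "wf_token_structure \<Sigma> t \<longleftrightarrow> (\<forall>l\<in>set t. symbol_layer \<Sigma> l)"

definition wf_branch :: "'a set \<Rightarrow> 'a branch \<Rightarrow> bool" where
  "wf_branch \<Sigma> b \<longleftrightarrow> wf_token_structure \<Sigma> (fst b) \<and>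
     (\<forall>(d, t)\<in>set (snd b). d \<in> \<Sigma> \<and> wf_token_structure \<Sigma> t)"

definition lang_ts :: "'a token_structure \<Rightarrow> 'a list set" where
  "lang_ts t = {w. length w = length t \<and> (\<forall>i<length t. w ! i \<in> t ! i)}"

definition conc :: "'a list set \<Rightarrow> 'a list set \<Rightarrow> 'a list set" where
  "conc A B = {u @ v | u v. u \<in> A \<and> v \<in> B}"

definition lang_branch :: "'a branch \<Rightarrow> 'a list set" where
  "lang_branch b = foldl (\<lambda>L (d, t). conc L (conc {[d]} (lang_ts t))) (lang_ts (fst b)) (snd b)"

text \<open>An Xtructure: a finite set of well-formed branches, deterministic in the
  sense that no string is represented by more than one branch.\<close>
definition xtructure :: "'a set \<Rightarrow> 'a branch set \<Rightarrow> bool" where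
  "xtructure \<Sigma> X \<longleftrightarrow> finite X \<and> (\<forall>b\<in>X. wf_branch \<Sigma> b) \<and>
     (\<forall>b1\<in>X. \<forall>b2\<in>X. b1 \<noteq> b2 \<longrightarrow> lang_branch b1 \<inter> lang_branch b2 = {})"

definition lang_x :: "'a branch set \<Rightarrow> 'a list set" where
  "lang_x X = (\<Union>b\<in>X. lang_branch b)"

record ('s, 'a) dfa =
  states :: "'s set"
  start :: 's
  delta :: "'s \<Rightarrow> 'a \<Rightarrow> 's option"
  final :: "'s set"

definition dfa :: "'a set \<Rightarrow> ('s, 'a) dfa \<Rightarrow> bool" where
  "dfa \<Sigma> A \<longleftrightarrow> finite (states A) \<and> start A \<in> states A \<and> final A \<subseteq> states A \<and>
     (\<forall>q a q'. delta A q a = Some q' \<longrightarrow> q \<in> states A \<and> a \<in> \<Sigma> \<and> q' \<in> states A)"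

definition trans_graph :: "('s, 'a) dfa \<Rightarrow> ('s \<times> 's) set" where
  "trans_graph A = {(q, q'). \<exists>a. delta A q a = Some q'}"

definition dafsa :: "'a set \<Rightarrow> ('s, 'a) dfa \<Rightarrow> bool" where
  "dafsa \<Sigma> A \<longleftrightarrow> dfa \<Sigma> A \<and> acyclic (trans_graph A)"

fun run :: "('s, 'a) dfa \<Rightarrow> 's \<Rightarrow> 'a list \<Rightarrow> 's option" where
  "run A q [] = Some q"
| "run A q (a # w) = (case delta A q a of None \<Rightarrow> None | Some q' \<Rightarrow> run A q' w)"

definition lang_dfa :: "('s, 'a) dfa \<Rightarrow> 'a list set" where
  "lang_dfa A = {w. \<exists>q. run A (start A) w = Some q \<and> q \<in> final A}"

end

theory Submission
  imports Defs
begin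

lemma dafsa_fin_graph: "dafsa \<Sigma> A \<Longrightarrow> finite (trans_graph A)"
proof -
  assume d: "dafsa \<Sigma> A"
  hence "trans_graph A \<subseteq> states A \<times> states A"
    unfolding dafsa_def dfa_def trans_graph_def by blast
  moreover have "finite (states A)" using d unfolding dafsa_def dfa_def by blast
  ultimately show ?thesis using finite_subset by blast
qed

lemma fin_runs:
  assumes d: "dafsa \<Sigma> A" and fS: "finite \<Sigma>"
  shows "finite {w. run A q w \<noteq> None}"
proof -
  have wf: "wf ((trans_graph A)\<inverse>)"
    using finite_acyclic_wf_converse dafsa_fin_graph[OF d] d unfolding dafsa_def by blast
  show ?thesis
  proof (induction q rule: wf_induct[OF wf])
    case (1 q)
    have sub: "{w. run A q w \<noteq> None} \<subseteq> {[]} \<union> (\<Union>a\<in>\<Sigma>. \<Union>q'\<in>{q'. delta A q a = Some q'}. (Cons a) ` {w. run A q' w \<noteq> None})"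
    proof
      fix w assume "w \<in> {w. run A q w \<noteq> None}"
      thus "w \<in> {[]} \<union> (\<Union>a\<in>\<Sigma>. \<Union>q'\<in>{q'. delta A q a = Some q'}. (Cons a) ` {w. run A q' w \<noteq> None})"
      proof (cases w)
        case (Cons a w')
        assume r: "w \<in> {w. run A q w \<noteq> None}"
        then obtain q' where q': "delta A q a = Some q'" "run A q' w' \<noteq> None"
          using Cons by (auto split: option.splits)
        hence "a \<in> \<Sigma>" using d unfolding dafsa_def dfa_def by blast
        thus ?thesis using q' Cons by blast
      qed simp
    qed
    have "finite (\<Union>a\<in>\<Sigma>. \<Union>q'\<in>{q'. delta A q a = Some q'}. (Cons a) ` {w. run A q' w \<noteq> None})"
    proof (intro finite_UN_I fS)
      fix a show "finite {q'. delta A q a = Some q'}"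
        by (rule finite_subset[of _ "{the (delta A q a)}"]) auto
    next
      fix a q' assume "q' \<in> {q'. delta A q a = Some q'}"
      hence "(q', q) \<in> (trans_graph A)\<inverse>" unfolding trans_graph_def by auto
      thus "finite ((Cons a) ` {w. run A q' w \<noteq> None})" using 1 by blast
    qed
    thus ?case using sub finite_subset by blast
  qed
qed

lemma run_chars: "dfa \<Sigma> A \<Longrightarrow> run A q w = Some q' \<Longrightarrow> set w \<subseteq> \<Sigma>"
  by (induction w arbitrary: q) (auto simp: dfa_def split: option.splits)

lemma lang_ts_single: "lang_ts (map (\<lambda>c. {c}) w) = {w}"
  unfolding lang_ts_def by (auto intro: nth_equalityI)

lemma dir2:
  assumes fS: "finite \<Sigma>" and d: "dafsa \<Sigma> A"
  shows "\<exists>X. xtructure \<Sigma> X \<and> lang_x X = lang_dfa A"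
proof -
  let ?L = "lang_dfa A"
  have fL: "finite ?L"
    using fin_runs[OF d fS, of "start A"] unfolding lang_dfa_def
    by (rule finite_subset[rotated]) auto
  have chars: "\<And>w. w \<in> ?L \<Longrightarrow> set w \<subseteq> \<Sigma>"
  proof -
    fix w assume "w \<in> ?L"
    then obtain q where "run A (start A) w = Some q" unfolding lang_dfa_def by blast
    moreover have "dfa \<Sigma> A" using d unfolding dafsa_def by blast
    ultimately show "set w \<subseteq> \<Sigma>" using run_chars by metis
  qed
  define X where "X = (\<lambda>w. (map (\<lambda>c. {c}) w, [] :: ('a \<times> 'a set list) list)) ` ?L"
  have lb: "\<And>w. lang_branch (map (\<lambda>c. {c}) w, [] :: ('a \<times> 'a set list) list) = {w}"
    unfolding lang_branch_def by (simp add: lang_ts_single)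
  have "xtructure \<Sigma> X"
    unfolding xtructure_def
  proof (intro conjI ballI impI)
    show "finite X" using fL X_def by simp
  next
    fix b assume "b \<in> X"
    then obtain w where w: "w \<in> ?L" "b = (map (\<lambda>c. {c}) w, [])" unfolding X_def by blast
    thus "wf_branch \<Sigma> b" using chars[OF w(1)]
      by (auto simp: wf_branch_def wf_token_structure_def symbol_layer_def)
  next
    fix b1 b2 assume "b1 \<in> X" "b2 \<in> X" "b1 \<noteq> b2"
    then obtain w1 w2 where "b1 = (map (\<lambda>c. {c}) w1, [])" "b2 = (map (\<lambda>c. {c}) w2, [])"
      unfolding X_def by blast
    thus "lang_branch b1 \<inter> lang_branch b2 = {}" using lb \<open>b1 \<noteq> b2\<close> by auto
  qed
  moreover have "lang_x X = ?L" unfolding lang_x_def X_def by (simp add: lb)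
  ultimately show ?thesis by blast
qed

lemma conc_fin: "finite A \<Longrightarrow> finite B \<Longrightarrow> finite (conc A B)"
proof -
  assume "finite A" "finite B"
  moreover have "conc A B = (\<lambda>(u,v). u @ v) ` (A \<times> B)" unfolding conc_def by auto
  ultimately show ?thesis by simp
qed

lemma conc_lists: "A \<subseteq> lists S \<Longrightarrow> B \<subseteq> lists S \<Longrightarrow> conc A B \<subseteq> lists S"
  unfolding conc_def by (auto dest!: subsetD)

lemma lang_ts_ok:
  assumes "finite \<Sigma>" "wf_token_structure \<Sigma> t"
  shows "finite (lang_ts t) \<and> lang_ts t \<subseteq> lists \<Sigma>"
proof -
  have "lang_ts t \<subseteq> {w. set w \<subseteq> \<Sigma> \<and> length w = length t}"
    using assms(2) unfolding lang_ts_def wf_token_structure_def symbol_layer_def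
    by (auto simp: in_set_conv_nth) (metis nth_mem subsetD)
  thus ?thesis using finite_lists_length_eq[OF assms(1)] finite_subset by blast
qed

lemma foldl_ok:
  assumes "finite \<Sigma>" "\<forall>(d, t)\<in>set ts. d \<in> \<Sigma> \<and> wf_token_structure \<Sigma> t"
    "finite L0" "L0 \<subseteq> lists \<Sigma>"
  shows "finite (foldl (\<lambda>L (d, t). conc L (conc {[d]} (lang_ts t))) L0 ts) \<and>
         foldl (\<lambda>L (d, t). conc L (conc {[d]} (lang_ts t))) L0 ts \<subseteq> lists \<Sigma>"
  using assms(2-4)
proof (induction ts arbitrary: L0)
  case Nil thus ?case by simp
next
  case (Cons p ts)
  obtain d t where p: "p = (d, t)" by (cases p)
  have dt: "d \<in> \<Sigma>" "wf_token_structure \<Sigma> t" using Cons.prems(1) p by auto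
  have "finite (conc L0 (conc {[d]} (lang_ts t)))"
    using conc_fin lang_ts_ok[OF assms(1) dt(2)] Cons.prems by (simp add: conc_fin)
  moreover have "conc L0 (conc {[d]} (lang_ts t)) \<subseteq> lists \<Sigma>"
    using conc_lists lang_ts_ok[OF assms(1) dt(2)] Cons.prems dt(1) by (simp add: conc_lists)
  ultimately show ?case using Cons.IH Cons.prems(1) p by simp
qed

lemma lang_x_ok:
  assumes "finite \<Sigma>" "xtructure \<Sigma> X"
  shows "finite (lang_x X) \<and> lang_x X \<subseteq> lists \<Sigma>"
proof -
  have "\<And>b. b \<in> X \<Longrightarrow> finite (lang_branch b) \<and> lang_branch b \<subseteq> lists \<Sigma>"
  proof -
    fix b assume "b \<in> X"
    hence w: "wf_branch \<Sigma> b" using assms(2) unfolding xtructure_def by blast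
    show "finite (lang_branch b) \<and> lang_branch b \<subseteq> lists \<Sigma>"
      unfolding lang_branch_def
      using foldl_ok[OF assms(1)] lang_ts_ok[OF assms(1)] w unfolding wf_branch_def by blast
  qed
  moreover have "finite X" using assms(2) unfolding xtructure_def by blast
  ultimately show ?thesis unfolding lang_x_def by auto
qed

lemma dir1:
  assumes fL: "finite L" and LS: "L \<subseteq> lists \<Sigma>"
  shows "\<exists>A :: (nat, 'a) dfa. dafsa \<Sigma> A \<and> lang_dfa A = L"
proof -
  define P where "P = {[]} \<union> {p. \<exists>w\<in>L. \<exists>s. p @ s = w}"
  have pc: "\<And>p s. p @ s \<in> P \<Longrightarrow> p \<in> P" 
  proof -
    fix p s assume "p @ s \<in> P"
    then consider "p @ s = []" | w s' where "w \<in> L" "(p @ s) @ s' = w" unfolding P_def by blast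
    thus "p \<in> P"
    proof cases
      case 1 thus ?thesis unfolding P_def by simp
    next
      case 2
      hence "p @ (s @ s') = w" by simp
      thus ?thesis using 2(1) unfolding P_def by blast
    qed
  qed
  have LP: "L \<subseteq> P" unfolding P_def by auto
  have PS: "P \<subseteq> lists \<Sigma>" using LS unfolding P_def by auto
  have fP: "finite P"
  proof -
    have "P \<subseteq> {[]} \<union> (\<Union>w\<in>L. (\<lambda>n. take n w) ` {..length w})"
      unfolding P_def by (auto, metis append_eq_conv_conj atMost_iff image_eqI length_append le_add1)
    thus ?thesis using fL finite_subset by blast
  qed
  obtain enc :: "'a list \<Rightarrow> nat" where inj: "inj_on enc P"
    using finite_imp_inj_to_nat_seg[OF fP] by blast
  define dec where "dec = inv_into P enc"
  have dec: "\<And>p. p \<in> P \<Longrightarrow> dec (enc p) = p" unfolding dec_def using inj by simp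
  define A :: "(nat, 'a) dfa" where "A = \<lparr> states = enc ` P, start = enc [],
     delta = (\<lambda>n a. if n \<in> enc ` P \<and> dec n @ [a] \<in> P then Some (enc (dec n @ [a])) else None),
     final = enc ` L \<rparr>"
  have runP: "\<And>p. p \<in> P \<Longrightarrow> run A (enc p) w = (if p @ w \<in> P then Some (enc (p @ w)) else None)" for w
  proof (induction w)
    case Nil thus ?case by simp
  next
    case (Cons a w)
    show ?case
    proof (cases "p @ [a] \<in> P")
      case True
      hence "run A (enc p) (a # w) = run A (enc (p @ [a])) w"
        using Cons.prems dec by (simp add: A_def)
      thus ?thesis using Cons.IH[OF True] by simp
    next
      case False
      hence "p @ a # w \<notin> P" using pc[of "p @ [a]" w] by auto
      thus ?thesis using False Cons.prems dec by (simp add: A_def)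
    qed
  qed
  have eP: "[] \<in> P" unfolding P_def by simp
  have "dfa \<Sigma> A" unfolding dfa_def
  proof (intro conjI allI impI)
    show "finite (states A)" using fP by (simp add: A_def)
    show "start A \<in> states A" using eP by (simp add: A_def)
    show "final A \<subseteq> states A" using LP by (auto simp: A_def)
  next
    fix q a q' assume h: "delta A q a = Some q'"
    hence q: "q \<in> enc ` P" "dec q @ [a] \<in> P" "q' = enc (dec q @ [a])"
      by (auto simp: A_def split: if_splits)
    show "q \<in> states A" "a \<in> \<Sigma>" "q' \<in> states A"
      using q PS by (auto simp: A_def)
  qed
  moreover have "acyclic (trans_graph A)"
  proof -
    have "trans_graph A \<subseteq> measure (\<lambda>n. length (dec n))"
    proof
      fix x assume "x \<in> trans_graph A"
      then obtain q q' a where x: "x = (q, q')" "delta A q a = Some q'"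
        unfolding trans_graph_def by auto
      hence q: "q \<in> enc ` P" "dec q @ [a] \<in> P" "q' = enc (dec q @ [a])"
        by (auto simp: A_def split: if_splits)
      thus "x \<in> measure (\<lambda>n. length (dec n))" using x(1) dec by simp
    qed
    thus ?thesis using wf_acyclic acyclic_subset by blast
  qed
  moreover have "lang_dfa A = L"
  proof -
    have "\<And>w. w \<in> lang_dfa A \<longleftrightarrow> w \<in> L"
    proof -
      fix w
      have "run A (start A) w = (if w \<in> P then Some (enc w) else None)"
        using runP[OF eP, of w] by (simp add: A_def)
      thus "w \<in> lang_dfa A \<longleftrightarrow> w \<in> L"
        unfolding lang_dfa_def using LP inj by (auto simp: A_def inj_on_def)
    qed
    thus ?thesis by blast
  qed
  ultimately show ?thesis unfolding dafsa_def by blast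
qed

theorem mainTheorem3:
  fixes \<Sigma> :: "'a set"
  assumes "finite \<Sigma>"
  shows "(\<forall>X. xtructure \<Sigma> X \<longrightarrow>
            (\<exists>A :: (nat, 'a) dfa. dafsa \<Sigma> A \<and> lang_dfa A = lang_x X))
       \<and> (\<forall>A :: ('s, 'a) dfa. dafsa \<Sigma> A \<longrightarrow>
            (\<exists>X. xtructure \<Sigma> X \<and> lang_x X = lang_dfa A))"
proof (intro conjI allI impI)
  fix X assume "xtructure \<Sigma> X"
  hence "finite (lang_x X)" "lang_x X \<subseteq> lists \<Sigma>" using lang_x_ok[OF assms] by auto
  thus "\<exists>A :: (nat, 'a) dfa. dafsa \<Sigma> A \<and> lang_dfa A = lang_x X" by (rule dir1)
next
  fix A :: "('s, 'a) dfa" assume "dafsa \<Sigma> A"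
  thus "\<exists>X. xtructure \<Sigma> X \<and> lang_x X = lang_dfa A" by (rule dir2[OF assms])
qed

end
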